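(* For all positive integers $p$ and $d$, $$c_\psi(p,d)=\frac{1}{(d-1)!}\sum_{i=1}^{d}s(d,i)\,J_{i-1}(p),$$ where $c_\psi(p,d)$ is the number of primitive points $x\in\mathbb{Z}^d$ with all coordinates positive and $\|x\|_1=p$.
   Context: A point of $\mathbb{Z}^d$ is primitive if its coordinates are relatively prime. $J_q$ is Jordan's totient function: $J_q(p)=p^q\prod_{n}(1-n^{-q})$, the product over the primes $n$ dividing $p$ (so $J_0(1)=1$ and $J_0(p)=0$ for $p>1$). $s(d,i)$ are the signed Stirling numbers of the first kind, given by $s(d+1,i)=-d\,s(d,i)+s(d,i-1)$, $s(i,i)=1$, $s(d,0)=0$ for $d>0$. *)

theory Defs
  imports "HOL-Analysis.Analysis" "HOL-Computational_Algebra.Primes"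
begin

fun signed_stirling :: "nat \<Rightarrow> nat \<Rightarrow> int" where
  "signed_stirling 0 0 = 1"
| "signed_stirling 0 (Suc i) = 0"
| "signed_stirling (Suc d) 0 = 0"
| "signed_stirling (Suc d) (Suc i) =
     - int d * signed_stirling d (Suc i) + signed_stirling d i"

definition jordan_totient :: "nat \<Rightarrow> nat \<Rightarrow> real" where
  "jordan_totient q p =
     real p ^ q * (\<Prod>n\<in>prime_factors p. (1 - 1 / real n ^ q))"

definition c_psi :: "nat \<Rightarrow> nat \<Rightarrow> nat" where
  "c_psi p d = card {x :: nat \<Rightarrow> int.
      (\<forall>i<d. x i > 0) \<and> (\<forall>i\<ge>d. x i = 0) \<and>
      (\<Sum>i<d. \<bar>x i\<bar>) = int p \<and> Gcd (x ` {..<d}) = 1}"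

end

theory Submission
  imports Defs
begin


lemma stirling_zero_above: "i > d \<Longrightarrow> signed_stirling d i = 0"
proof (induction d arbitrary: i)
  case 0 then show ?case by (cases i) auto
next
  case (Suc d) then show ?case by (cases i) auto
qed

lemma stirling_d0: "d > 0 \<Longrightarrow> signed_stirling d 0 = 0"
  by (cases d) auto

lemma ff_stirling:
  "(\<Prod>j<d. (x::real) - real j) = (\<Sum>i\<le>d. real_of_int (signed_stirling d i) * x ^ i)"
proof (induction d)
  case 0 then show ?case by simp
next
  case (Suc d)
  have "(\<Prod>j<Suc d. x - real j) = (\<Sum>i\<le>d. real_of_int (signed_stirling d i) * x ^ i) * (x - real d)"
    using Suc by simp
  also have "\<dots> = (\<Sum>i\<le>d. real_of_int (signed_stirling d i) * x ^ Suc i)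
      - (\<Sum>i\<le>d. real d * real_of_int (signed_stirling d i) * x ^ i)"
    by (simp add: sum_distrib_right sum_distrib_left algebra_simps sum_subtractf)
  also have "(\<Sum>i\<le>d. real d * real_of_int (signed_stirling d i) * x ^ i)
      = (\<Sum>i\<le>d. real d * real_of_int (signed_stirling d (Suc i)) * x ^ Suc i)"
  proof -
    have "(\<Sum>i\<le>Suc d. real d * real_of_int (signed_stirling d i) * x ^ i)
       = (\<Sum>i\<le>d. real d * real_of_int (signed_stirling d (Suc i)) * x ^ Suc i)"
      by (subst sum.atMost_Suc_shift) (cases d, auto)
    moreover have "(\<Sum>i\<le>Suc d. real d * real_of_int (signed_stirling d i) * x ^ i)
       = (\<Sum>i\<le>d. real d * real_of_int (signed_stirling d i) * x ^ i)"
      by (simp add: stirling_zero_above)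
    ultimately show ?thesis by simp
  qed
  also have "(\<Sum>i\<le>d. real_of_int (signed_stirling d i) * x ^ Suc i)
      - (\<Sum>i\<le>d. real d * real_of_int (signed_stirling d (Suc i)) * x ^ Suc i)
      = (\<Sum>i\<le>d. real_of_int (signed_stirling (Suc d) (Suc i)) * x ^ Suc i)"
    by (simp add: sum_subtractf[symmetric] algebra_simps)
  also have "\<dots> = (\<Sum>i\<le>Suc d. real_of_int (signed_stirling (Suc d) i) * x ^ i)"
    unfolding sum.atMost_Suc_shift by simp
  finally show ?case .
qed

lemma binom_stirling:
  assumes "d > 0" "m > 0"
  shows "real ((m - 1) choose (d - 1)) =
    (1 / fact (d - 1)) * (\<Sum>i=1..d. real_of_int (signed_stirling d i) * real m ^ (i - 1))"
proof -
  have "real ((m - 1) choose (d - 1)) = (\<Prod>i=0..<d-1. real (m-1) - real i) / fact (d-1)"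
    by (simp add: binomial_gbinomial gbinomial_prod_rev)
  also have "(\<Prod>i=0..<d-1. real (m-1) - real i) * real m = (\<Prod>j<d. real m - real j)"
  proof -
    obtain e where e: "d = Suc e" using assms by (cases d) auto
    have "(\<Prod>j<d. real m - real j) = real m * (\<Prod>j<e. real m - real (Suc j))"
      unfolding e by (subst prod.lessThan_Suc_shift) simp
    moreover have "(\<Prod>i=0..<d-1. real (m-1) - real i) = (\<Prod>j<e. real m - real (Suc j))"
      using assms unfolding e by (intro prod.cong) (auto simp: of_nat_diff)
    ultimately show ?thesis by simp
  qed
  hence "(\<Prod>i=0..<d-1. real (m-1) - real i) = (\<Prod>j<d. real m - real j) / real m"
    using assms by (simp add: field_simps)
  also have "(\<Prod>j<d. real m - real j) = (\<Sum>i\<le>d. real_of_int (signed_stirling d i) * real m ^ i)"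
    by (rule ff_stirling)
  also have "\<dots> = (\<Sum>i=1..d. real_of_int (signed_stirling d i) * real m ^ i)"
  proof -
    have "{..d} = insert 0 {1..d}" by auto
    thus ?thesis using assms by (simp add: stirling_d0)
  qed
  also have "\<dots> / real m = (\<Sum>i=1..d. real_of_int (signed_stirling d i) * real m ^ (i - 1))"
    unfolding sum_divide_distrib
    by (intro sum.cong refl) (use assms in \<open>auto simp: power_eq_if\<close>)
  finally show ?thesis by simp
qed



definition cmpo :: "nat \<Rightarrow> nat \<Rightarrow> (nat \<Rightarrow> int) set" where
  "cmpo d m = {x :: nat \<Rightarrow> int.
      (\<forall>i<d. x i > 0) \<and> (\<forall>i\<ge>d. x i = 0) \<and> (\<Sum>i<d. \<bar>x i\<bar>) = int m}"

lemma comp_card_finite: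
  assumes "d > 0" "m > 0"
  shows "finite (cmpo d m) \<and> card (cmpo d m) = (m - 1) choose (d - 1)"
proof (cases "m \<ge> d")
  case False
  have "cmpo d m = {}"
  proof (rule ccontr)
    assume "cmpo d m \<noteq> {}"
    then obtain x where x: "x \<in> cmpo d m" by blast
    have "(\<Sum>i<d. (1::int)) \<le> (\<Sum>i<d. \<bar>x i\<bar>)"
      by (rule sum_mono) (use x in \<open>auto simp: cmpo_def\<close>)
    with x False show False by (auto simp: cmpo_def)
  qed
  moreover have "(m - 1) choose (d - 1) = 0" using False assms by simp
  ultimately show ?thesis by simp
next
  case True
  define L where "L = {l::nat list. length l = d \<and> sum_list l = m - d}"
  define f where "f = (\<lambda>x::nat\<Rightarrow>int. map (\<lambda>i. nat (x i) - 1) [0..<d])"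
  define g where "g = (\<lambda>l::nat list. \<lambda>i. if i < d then int (l ! i) + 1 else (0::int))"
  have sl: "sum_list (map h [0..<d]) = (\<Sum>i<d. h i)" for h :: "nat \<Rightarrow> nat"
    by (simp add: sum_list_sum_nth atLeast0LessThan)
  have bij: "bij_betw f (cmpo d m) L"
  proof (rule bij_betw_byWitness[where f' = g])
    show "\<forall>a\<in>cmpo d m. g (f a) = a"
      by (auto simp: cmpo_def f_def g_def fun_eq_iff)
    show "\<forall>a'\<in>L. f (g a') = a'"
      by (auto simp: L_def f_def g_def intro!: nth_equalityI)
    show "f ` cmpo d m \<subseteq> L"
    proof
      fix l assume "l \<in> f ` cmpo d m"
      then obtain x where x: "x \<in> cmpo d m" "l = f x" by blast
      have "int (\<Sum>i<d. nat (x i) - 1) = (\<Sum>i<d. \<bar>x i\<bar> - 1)"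
        by (subst of_nat_sum, rule sum.cong) (use x in \<open>auto simp: cmpo_def of_nat_diff\<close>)
      also have "\<dots> = int m - int d" using x by (simp add: cmpo_def sum_subtractf)
      finally have h: "int (\<Sum>i<d. nat (x i) - 1) = int (m - d)" using True by (simp add: of_nat_diff)
      hence "(\<Sum>i<d. nat (x i) - 1) = m - d" by (simp only: of_nat_eq_iff)
      then show "l \<in> L" using x True by (simp add: L_def f_def sl)
    qed
    show "g ` L \<subseteq> cmpo d m"
    proof
      fix x assume "x \<in> g ` L"
      then obtain l where l: "l \<in> L" "x = g l" by blast
      have "(\<Sum>i<d. \<bar>x i\<bar>) = (\<Sum>i<d. int (l ! i) + 1)"
        by (rule sum.cong) (auto simp: l g_def)
      also have "\<dots> = int (sum_list l) + int d"
        using l by (simp add: sum.distrib L_def sum_list_sum_nth atLeast0LessThan)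
      finally show "x \<in> cmpo d m" using l True by (auto simp: cmpo_def g_def L_def)
    qed
  qed
  have finL: "finite L"
  proof (rule finite_subset)
    show "L \<subseteq> {l. set l \<subseteq> {0..m} \<and> length l = d}"
    proof
      fix l assume l: "l \<in> L"
      have "\<forall>y\<in>set l. y \<le> m"
      proof
        fix y assume "y \<in> set l"
        hence "y \<le> sum_list l" using member_le_sum_list[of y l] by simp
        thus "y \<le> m" using l by (simp add: L_def)
      qed
      thus "l \<in> {l. set l \<subseteq> {0..m} \<and> length l = d}" using l by (auto simp: L_def)
    qed
    show "finite {l. set l \<subseteq> {0..m} \<and> length l = d}"
      by (rule finite_lists_length_eq) simp
  qed
  have "card L = (m - d + d - 1) choose (m - d)"
    unfolding L_def by (rule card_length_sum_list)
  also have "\<dots> = (m - 1) choose (d - 1)"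
    using binomial_symmetric[of "d-1" "m-1"] True assms by simp
  finally show ?thesis using bij finL bij_betw_finite bij_betw_same_card by metis
qed



lemma cmpo_scale:
  assumes "k > 0" "k dvd m"
  shows "card {x \<in> cmpo d m. \<forall>i<d. int k dvd x i} = card (cmpo d (m div k))"
proof (rule bij_betw_same_card)
  show "bij_betw (\<lambda>x i. x i div int k) {x \<in> cmpo d m. \<forall>i<d. int k dvd x i} (cmpo d (m div k))"
  proof (rule bij_betw_byWitness[where f' = "\<lambda>y i. int k * y i"])
    show "\<forall>a\<in>{x \<in> cmpo d m. \<forall>i<d. int k dvd x i}. (\<lambda>i. int k * (a i div int k)) = a"
    proof (intro ballI ext)
      fix a i assume a: "a \<in> {x \<in> cmpo d m. \<forall>i<d. int k dvd x i}"
      show "int k * (a i div int k) = a i"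
      proof (cases "i < d")
        case True then show ?thesis using a by simp
      next
        case False then show ?thesis using a by (simp add: cmpo_def)
      qed
    qed
    show "\<forall>a'\<in>cmpo d (m div k). (\<lambda>i. int k * a' i div int k) = a'"
      using assms by simp
    show "(\<lambda>x i. x i div int k) ` {x \<in> cmpo d m. \<forall>i<d. int k dvd x i} \<subseteq> cmpo d (m div k)"
    proof
      fix y assume "y \<in> (\<lambda>x i. x i div int k) ` {x \<in> cmpo d m. \<forall>i<d. int k dvd x i}"
      then obtain x where x: "x \<in> cmpo d m" "\<forall>i<d. int k dvd x i" "y = (\<lambda>i. x i div int k)" by blast
      have xy: "x i = int k * y i" if "i < d" for i
        using x that by simp
      have pos: "y i > 0" if "i < d" for i
      proof -
        have "x i > 0" using x that by (simp add: cmpo_def)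
        hence "int k * y i > 0" using xy that by simp
        thus ?thesis using assms by (simp add: zero_less_mult_iff)
      qed
      have "int k * (\<Sum>i<d. \<bar>y i\<bar>) = (\<Sum>i<d. \<bar>x i\<bar>)"
        unfolding sum_distrib_left
        by (rule sum.cong) (simp_all add: xy abs_mult)
      also have "\<dots> = int m" using x by (simp add: cmpo_def)
      also have "\<dots> = int k * int (m div k)" using assms by (metis dvd_mult_div_cancel of_nat_mult)
      finally have "(\<Sum>i<d. \<bar>y i\<bar>) = int (m div k)"
        using assms by simp
      moreover have "\<forall>i\<ge>d. y i = 0" using x by (simp add: cmpo_def)
      ultimately show "y \<in> cmpo d (m div k)" using pos by (simp add: cmpo_def)
    qed
    show "(\<lambda>y i. int k * y i) ` cmpo d (m div k) \<subseteq> {x \<in> cmpo d m. \<forall>i<d. int k dvd x i}"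
    proof
      fix x assume "x \<in> (\<lambda>y i. int k * y i) ` cmpo d (m div k)"
      then obtain y where y: "y \<in> cmpo d (m div k)" "x = (\<lambda>i. int k * y i)" by blast
      have "(\<Sum>i<d. \<bar>x i\<bar>) = int k * (\<Sum>i<d. \<bar>y i\<bar>)"
        by (simp add: y sum_distrib_left abs_mult)
      also have "\<dots> = int k * int (m div k)" using y by (simp add: cmpo_def)
      also have "\<dots> = int m" using assms by (metis dvd_mult_div_cancel of_nat_mult)
      finally show "x \<in> {x \<in> cmpo d m. \<forall>i<d. int k dvd x i}"
        using y assms by (auto simp: cmpo_def zero_less_mult_iff)
    qed
  qed
qed



lemma gcd_one_iff:
  fixes x :: "nat \<Rightarrow> int"
  assumes "d > 0" "\<forall>i<d. x i > 0"
  shows "Gcd (x ` {..<d}) = 1 \<longleftrightarrow> (\<forall>q::nat. prime q \<longrightarrow> \<not> (\<forall>i<d. int q dvd x i))"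
proof
  assume g: "Gcd (x ` {..<d}) = 1"
  show "\<forall>q::nat. prime q \<longrightarrow> \<not> (\<forall>i<d. int q dvd x i)"
  proof (intro allI impI notI)
    fix q :: nat assume q: "prime q" "\<forall>i<d. int q dvd x i"
    hence "int q dvd Gcd (x ` {..<d})" by (intro Gcd_greatest) auto
    with g have "int q dvd 1" by simp
    with q show False by (simp add: prime_nat_iff)
  qed
next
  assume h: "\<forall>q::nat. prime q \<longrightarrow> \<not> (\<forall>i<d. int q dvd x i)"
  show "Gcd (x ` {..<d}) = 1"
  proof (rule ccontr)
    assume ne: "Gcd (x ` {..<d}) \<noteq> 1"
    have "Gcd (x ` {..<d}) \<ge> 0" by simp
    moreover have "Gcd (x ` {..<d}) \<noteq> 0"
    proof
      assume "Gcd (x ` {..<d}) = 0"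
      hence "x 0 = 0" using assms by (auto simp: Gcd_0_iff)
      thus False using assms by auto
    qed
    ultimately have "\<bar>Gcd (x ` {..<d})\<bar> \<noteq> 1" using ne by simp
    then obtain p :: int where p: "prime p" "p dvd Gcd (x ` {..<d})" by (rule prime_factor_int)
    have "p > 0" using p by (simp add: prime_gt_0_int)
    have "prime (nat p)" using p by simp
    moreover have "\<forall>i<d. int (nat p) dvd x i"
    proof (intro allI impI)
      fix i assume "i < d"
      hence "Gcd (x ` {..<d}) dvd x i" by (intro Gcd_dvd) auto
      thus "int (nat p) dvd x i" using p \<open>p > 0\<close> by (simp add: dvd_trans[of p])
    qed
    ultimately show False using h by blast
  qed
qed



lemma prod_primes_dvd:
  fixes a :: int
  assumes "finite S" "\<forall>q\<in>S. prime q"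
  shows "int (\<Prod>S) dvd a \<longleftrightarrow> (\<forall>q\<in>S. int q dvd a)"
  using assms
proof (induction S rule: finite_induct)
  case empty then show ?case by simp
next
  case (insert q S)
  have cop: "coprime (int q) (int (\<Prod>S))"
  proof -
    have "coprime q (\<Prod>i\<in>S. i)"
      by (rule prod_coprime_right) (use insert in \<open>auto intro: primes_coprime\<close>)
    thus ?thesis by (simp only: coprime_int_iff)
  qed
  have "int (\<Prod>(insert q S)) = int q * int (\<Prod>S)" using insert by simp
  hence "int (\<Prod>(insert q S)) dvd a \<longleftrightarrow> int q dvd a \<and> int (\<Prod>S) dvd a"
    using divides_mult[OF _ _ cop, of a] dvd_mult_left[of "int q" "int (\<Prod>S)" a]
      dvd_mult_right[of "int q" "int (\<Prod>S)" a] by (simp only:) blast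
  thus ?case using insert by simp
qed



lemma alt_sum_pow:
  assumes "finite T"
  shows "(\<Sum>S\<in>Pow T. (-1::int) ^ card S) = (if T = {} then 1 else 0)"
proof (cases "T = {}")
  case True then show ?thesis by simp
next
  case False
  have "card {S. S \<subseteq> T \<and> {} \<subseteq> S \<and> even (card S)} = card {S. S \<subseteq> T \<and> {} \<subseteq> S \<and> odd (card S)}"
    using assms False by (intro card_subsupersets_even_odd) auto
  hence "(\<Sum>S\<in>Pow T. (-1::int) ^ card S) = 0"
    using assms by (intro sum_alternating_cancels) (auto simp: Pow_def)
  thus ?thesis using False by simp
qed





lemma prod_neg_inv_pow:
  assumes "finite X"
  shows "(\<Prod>n\<in>X. - (1 / real n ^ q)) = (-1) ^ card X * (1 / (\<Prod>n\<in>X. real n)) ^ q"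
  using assms
  by (induction X rule: finite_induct) (auto simp: power_mult_distrib field_simps)

lemma jordan_expand:
  "jordan_totient q p = (\<Sum>S\<in>Pow (prime_factors p). (-1) ^ card S * (real p / real (\<Prod>S)) ^ q)"
proof -
  let ?P = "prime_factors p"
  have "(\<Prod>n\<in>?P. 1 - 1 / real n ^ q) = (\<Prod>n\<in>?P. (- (1 / real n ^ q)) + 1)" by simp
  also have "\<dots> = (\<Sum>X\<in>Pow ?P. (\<Prod>n\<in>X. - (1 / real n ^ q)) * (\<Prod>n\<in>?P - X. 1))"
    by (rule prod_add) simp
  also have "\<dots> = (\<Sum>X\<in>Pow ?P. (-1) ^ card X * (1 / (\<Prod>n\<in>X. real n)) ^ q)"
  proof (intro sum.cong refl)
    fix X assume "X \<in> Pow ?P"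
    hence fin: "finite X" by (auto intro: finite_subset)
    show "(\<Prod>n\<in>X. - (1 / real n ^ q)) * (\<Prod>n\<in>?P - X. 1) = (-1) ^ card X * (1 / (\<Prod>n\<in>X. real n)) ^ q"
      using prod_neg_inv_pow[OF fin, of q] by simp
  qed
  finally have e: "(\<Prod>n\<in>?P. 1 - 1 / real n ^ q) = (\<Sum>X\<in>Pow ?P. (-1) ^ card X * (1 / (\<Prod>n\<in>X. real n)) ^ q)" .
  show ?thesis
    unfolding jordan_totient_def e sum_distrib_left
    by (intro sum.cong refl) (simp add: power_divide)
qed



lemma count_ie:
  assumes "p > 0" "d > 0"
  shows "int (c_psi p d) = (\<Sum>S\<in>Pow (prime_factors p). (-1) ^ card S * int ((p div \<Prod>S - 1) choose (d - 1)))"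
proof -
  let ?P = "prime_factors p"
  define A where "A = cmpo d p"
  define Q where "Q = (\<lambda>x. {q \<in> ?P. \<forall>i<d. int q dvd x i})"
  have finA: "finite A" using comp_card_finite assms A_def by blast
  have finP: "finite ?P" by simp
  have QP: "Q x \<subseteq> ?P" for x by (auto simp: Q_def)
  have gq: "Gcd (x ` {..<d}) = 1 \<longleftrightarrow> Q x = {}" if x: "x \<in> A" for x
  proof -
    have pos: "\<forall>i<d. x i > 0" using x by (simp add: A_def cmpo_def)
    have "(\<forall>q::nat. prime q \<longrightarrow> \<not> (\<forall>i<d. int q dvd x i)) \<longleftrightarrow> Q x = {}"
    proof
      assume "\<forall>q::nat. prime q \<longrightarrow> \<not> (\<forall>i<d. int q dvd x i)"
      thus "Q x = {}" by (auto simp: Q_def)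
    next
      assume e: "Q x = {}"
      show "\<forall>q::nat. prime q \<longrightarrow> \<not> (\<forall>i<d. int q dvd x i)"
      proof (intro allI impI notI)
        fix q :: nat assume q: "prime q" "\<forall>i<d. int q dvd x i"
        have "int q dvd (\<Sum>i<d. \<bar>x i\<bar>)" using q by (intro dvd_sum) auto
        hence "int q dvd int p" using x by (simp add: A_def cmpo_def)
        hence "q dvd p" by simp
        hence "q \<in> Q x" using q assms by (auto simp: Q_def in_prime_factors_iff)
        thus False using e by simp
      qed
    qed
    thus ?thesis using gcd_one_iff[OF assms(2) pos] by simp
  qed
  have cset: "{x :: nat \<Rightarrow> int.
      (\<forall>i<d. x i > 0) \<and> (\<forall>i\<ge>d. x i = 0) \<and>
      (\<Sum>i<d. \<bar>x i\<bar>) = int p \<and> Gcd (x ` {..<d}) = 1} = {x \<in> A. Q x = {}}"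
    using gq by (auto simp: A_def cmpo_def)
  have "int (c_psi p d) = int (card {x \<in> A. Q x = {}})"
    unfolding c_psi_def cset ..
  also have "\<dots> = (\<Sum>x\<in>A. if Q x = {} then 1 else 0)"
    using finA by (simp add: sum.If_cases Int_def conj_commute)
  also have "\<dots> = (\<Sum>x\<in>A. \<Sum>S\<in>Pow ?P. if S \<subseteq> Q x then (-1) ^ card S else 0)"
  proof (intro sum.cong refl)
    fix x assume "x \<in> A"
    have finQ: "finite (Q x)" using QP finP by (rule finite_subset)
    have "{S \<in> Pow ?P. S \<subseteq> Q x} = Pow (Q x)" using QP by auto
    hence "(\<Sum>S\<in>Pow ?P. if S \<subseteq> Q x then (-1::int) ^ card S else 0) = (\<Sum>S\<in>Pow (Q x). (-1) ^ card S)"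
      using finP by (simp add: sum.inter_filter[symmetric])
    also have "\<dots> = (if Q x = {} then 1 else 0)" by (rule alt_sum_pow[OF finQ])
    finally show "(if Q x = {} then 1 else 0) = (\<Sum>S\<in>Pow ?P. if S \<subseteq> Q x then (-1::int) ^ card S else 0)" by simp
  qed
  also have "\<dots> = (\<Sum>S\<in>Pow ?P. \<Sum>x\<in>A. if S \<subseteq> Q x then (-1) ^ card S else 0)"
    by (rule sum.swap)
  also have "\<dots> = (\<Sum>S\<in>Pow ?P. (-1) ^ card S * int ((p div \<Prod>S - 1) choose (d - 1)))"
  proof (intro sum.cong refl)
    fix S assume S: "S \<in> Pow ?P"
    have finS: "finite S" using S finP by (auto intro: finite_subset)
    have prS: "\<forall>q\<in>S. prime q" using S by (auto simp: in_prime_factors_iff)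
    have "int (\<Prod>S) dvd int p"
      using prod_primes_dvd[OF finS prS, of "int p"] S by (auto simp: in_prime_factors_iff)
    hence dv: "\<Prod>S dvd p" by (simp only: of_nat_dvd_iff)
    have pos: "\<Prod>S > 0" using prS finS by (simp add: prime_gt_0_nat prod_pos)
    have mpos: "p div \<Prod>S > 0" using dv pos assms
      by (metis dvd_div_eq_0_iff gr0I not_gr0)
    have "{x \<in> A. S \<subseteq> Q x} = {x \<in> cmpo d p. \<forall>i<d. int (\<Prod>S) dvd x i}"
      using S prod_primes_dvd[OF finS prS] by (auto simp: A_def Q_def)
    hence "card {x \<in> A. S \<subseteq> Q x} = card (cmpo d (p div \<Prod>S))"
      using cmpo_scale[OF pos dv] by simp
    also have "\<dots> = (p div \<Prod>S - 1) choose (d - 1)"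
      using comp_card_finite[OF assms(2) mpos] by simp
    finally have c: "card {x \<in> A. S \<subseteq> Q x} = (p div \<Prod>S - 1) choose (d - 1)" .
    have "(\<Sum>x\<in>A. if S \<subseteq> Q x then (-1::int) ^ card S else 0) = (\<Sum>x\<in>{x \<in> A. S \<subseteq> Q x}. (-1) ^ card S)"
      by (rule sum.inter_filter[OF finA, of "\<lambda>x. (-1::int) ^ card S" "\<lambda>x. S \<subseteq> Q x", symmetric])
    also have "\<dots> = (-1) ^ card S * int (card {x \<in> A. S \<subseteq> Q x})" by simp
    finally show "(\<Sum>x\<in>A. if S \<subseteq> Q x then (-1::int) ^ card S else 0) = (-1) ^ card S * int ((p div \<Prod>S - 1) choose (d - 1))"
      using c by simp
  qed
  finally show ?thesis .
qed



theorem theorem2p4: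
  fixes p d :: nat
  assumes "p > 0" and "d > 0"
  shows "real (c_psi p d) =
    (1 / fact (d - 1)) * (\<Sum>i=1..d. real_of_int (signed_stirling d i) * jordan_totient (i - 1) p)"
proof -
  let ?P = "prime_factors p"
  have "real (c_psi p d) = real_of_int (int (c_psi p d))" by simp
  also have "\<dots> = (\<Sum>S\<in>Pow ?P. (-1) ^ card S * real ((p div \<Prod>S - 1) choose (d - 1)))"
    unfolding count_ie[OF assms] by simp
  also have "\<dots> = (\<Sum>S\<in>Pow ?P. (-1) ^ card S * ((1 / fact (d - 1)) *
      (\<Sum>i=1..d. real_of_int (signed_stirling d i) * (real p / real (\<Prod>S)) ^ (i - 1))))"
  proof (intro sum.cong refl)
    fix S assume S: "S \<in> Pow ?P"
    have finS: "finite S" using S by (auto intro: finite_subset)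
    have prS: "\<forall>q\<in>S. prime q" using S by (auto simp: in_prime_factors_iff)
    have "int (\<Prod>S) dvd int p"
      using prod_primes_dvd[OF finS prS, of "int p"] S by (auto simp: in_prime_factors_iff)
    hence dv: "\<Prod>S dvd p" by (simp only: of_nat_dvd_iff)
    have pos: "\<Prod>S > 0" using prS finS by (simp add: prime_gt_0_nat prod_pos)
    have mpos: "p div \<Prod>S > 0" using dv pos assms
      by (metis dvd_div_eq_0_iff gr0I not_gr0)
    have r: "real (p div \<Prod>S) = real p / real (\<Prod>S)" using dv by (simp add: real_of_nat_div)
    show "(-1) ^ card S * real ((p div \<Prod>S - 1) choose (d - 1)) = (-1) ^ card S * ((1 / fact (d - 1)) *
      (\<Sum>i=1..d. real_of_int (signed_stirling d i) * (real p / real (\<Prod>S)) ^ (i - 1)))"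
      using binom_stirling[OF assms(2) mpos] unfolding r by simp
  qed
  also have "\<dots> = (1 / fact (d - 1)) * (\<Sum>i=1..d. real_of_int (signed_stirling d i) *
      (\<Sum>S\<in>Pow ?P. (-1) ^ card S * (real p / real (\<Prod>S)) ^ (i - 1)))"
    by (simp add: sum_distrib_left mult_ac sum.swap[of _ "Pow ?P"])
  also have "\<dots> = (1 / fact (d - 1)) * (\<Sum>i=1..d. real_of_int (signed_stirling d i) * jordan_totient (i - 1) p)"
    by (simp only: jordan_expand)
  finally show ?thesis .
qed


end
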